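(* Let $\lambda$ be an infinite cardinal with $\lambda=\lambda^{<\lambda}$. Then $(\mathfrak{b}^5_\lambda)'\le\mathfrak{b}^1_\lambda$.
   Context: For sets $A,B$, $A\subseteq^* B$ means $|A\setminus B|<\lambda$. For families $\mathcal{B},\mathcal{C}$ of subsets of $\lambda\times\lambda$, a set $S$ separates $\mathcal{B}$ and $\mathcal{C}$ if $B\subseteq^* S$ for every $B\in\mathcal{B}$ and $|C\cap S|<\lambda$ for every $C\in\mathcal{C}$; $\mathcal{B},\mathcal{C}$ are separable if some $S$ separates them. A family is almost disjoint if any two distinct members meet in fewer than $\lambda$ points. $(\mathfrak{b}^5_\lambda)'$ is the least cardinality of a family $\mathcal{B}\subseteq[\lambda\times\lambda]^\lambda$ for which there is $\mathcal{C}\subseteq[\lambda\times\lambda]^\lambda$ with $|\mathcal{C}|=\lambda$, $\mathcal{B}\cap\mathcal{C}=\emptyset$, $\mathcal{B}\cup\mathcal{C}$ almost disjoint, and such that for every $\mathcal{D}\in[\mathcal{C}]^\lambda$, $\mathcal{B}$ and $\mathcal{D}$ are not separable. For $f,g\in{}^\lambda\lambda$, $f<^* g$ means $|\{\alpha<\lambda: f(\alpha)\ge g(\alpha)\}|<\lambda$ and $f\le^*g$ means $|\{\alpha: f(\alpha)>g(\alpha)\}|<\lambda$; $B\subseteq{}^\lambda\lambda$ is unbounded if no $h$ satisfies $f\le^* h$ for all $f\in B$. $\mathfrak{b}^1_\lambda$ is the least cardinality of an unbounded $B\subseteq{}^\lambda\lambda$ all of whose members are strictly increasing and which is well ordered by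 $<^*$. *)

theory Defs
  imports Main "HOL-Library.FuncSet"
begin

text \<open>The cardinal lambda is represented by a type 'k with a well-order
whose order type is the initial ordinal lambda: the type is infinite and every
proper initial segment has cardinality strictly below that of the type.\<close>

definition infinite_cardinal_type :: "'k::wellorder itself \<Rightarrow> bool" where
  "infinite_cardinal_type _ \<longleftrightarrow> infinite (UNIV :: 'k set) \<and>
     (\<forall>x::'k. (card_of {y. y < x}, card_of (UNIV :: 'k set)) \<in> ordLess)"

text \<open>lambda^{<lambda} = lambda: the set of all functions from some alpha < lambda
(an initial segment) to lambda has cardinality lambda.\<close>
definition lambda_lt_lambda :: "'k::wellorder itself \<Rightarrow> bool" where
  "lambda_lt_lambda _ \<longleftrightarrow>
     (card_of (SIGMA a:(UNIV::'k set). ({b. b < a} \<rightarrow>\<^sub>E (UNIV :: 'k set))),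
      card_of (UNIV :: 'k set)) \<in> ordIso"

definition small :: "'a set \<Rightarrow> 'k itself \<Rightarrow> bool" where
  "small A _ \<longleftrightarrow> (card_of A, card_of (UNIV :: 'k set)) \<in> ordLess"

definition size_lambda :: "'a set \<Rightarrow> 'k itself \<Rightarrow> bool" where
  "size_lambda A _ \<longleftrightarrow> (card_of A, card_of (UNIV :: 'k set)) \<in> ordIso"

definition almost_subset :: "('k \<times> 'k) set \<Rightarrow> ('k \<times> 'k) set \<Rightarrow> bool" where
  "almost_subset A B \<longleftrightarrow> small (A - B) TYPE('k)"

definition separates :: "('k \<times> 'k) set \<Rightarrow> ('k \<times> 'k) set set \<Rightarrow> ('k \<times> 'k) set set \<Rightarrow> bool" where
  "separates S \<B> \<C> \<longleftrightarrow> (\<forall>B\<in>\<B>. almost_subset B S) \<and> (\<forall>C\<in>\<C>. small (C \<inter> S) TYPE('k))"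

definition separable :: "('k \<times> 'k) set set \<Rightarrow> ('k \<times> 'k) set set \<Rightarrow> bool" where
  "separable \<B> \<C> \<longleftrightarrow> (\<exists>S. separates S \<B> \<C>)"

definition almost_disjoint :: "('k \<times> 'k) set set \<Rightarrow> bool" where
  "almost_disjoint F \<longleftrightarrow> (\<forall>X\<in>F. \<forall>Y\<in>F. X \<noteq> Y \<longrightarrow> small (X \<inter> Y) TYPE('k))"

definition big_subsets :: "'k itself \<Rightarrow> ('k \<times> 'k) set set" where
  "big_subsets _ = {X. size_lambda X TYPE('k)}"

definition b5'_family :: "('k \<times> 'k) set set \<Rightarrow> bool" where
  "b5'_family \<B> \<longleftrightarrow> \<B> \<subseteq> big_subsets TYPE('k) \<and>
     (\<exists>\<C>. \<C> \<subseteq> big_subsets TYPE('k) \<and> size_lambda \<C> TYPE('k) \<and> \<B> \<inter> \<C> = {} \<and>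
          almost_disjoint (\<B> \<union> \<C>) \<and>
          (\<forall>\<D>. \<D> \<subseteq> \<C> \<and> size_lambda \<D> TYPE('k) \<longrightarrow> \<not> separable \<B> \<D>))"

definition eventually_less :: "('k::wellorder \<Rightarrow> 'k) \<Rightarrow> ('k \<Rightarrow> 'k) \<Rightarrow> bool" where
  "eventually_less f g \<longleftrightarrow> small {a. f a \<ge> g a} TYPE('k)"

definition eventually_le :: "('k::wellorder \<Rightarrow> 'k) \<Rightarrow> ('k \<Rightarrow> 'k) \<Rightarrow> bool" where
  "eventually_le f g \<longleftrightarrow> small {a. f a > g a} TYPE('k)"

definition unbounded :: "('k::wellorder \<Rightarrow> 'k) set \<Rightarrow> bool" where
  "unbounded B \<longleftrightarrow> \<not> (\<exists>h. \<forall>f\<in>B. eventually_le f h)"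

definition wellordered_by_eventually_less :: "('k::wellorder \<Rightarrow> 'k) set \<Rightarrow> bool" where
  "wellordered_by_eventually_less B \<longleftrightarrow>
     (\<forall>f\<in>B. \<not> eventually_less f f) \<and>
     (\<forall>f\<in>B. \<forall>g\<in>B. \<forall>h\<in>B. eventually_less f g \<and> eventually_less g h \<longrightarrow> eventually_less f h) \<and>
     (\<forall>f\<in>B. \<forall>g\<in>B. f \<noteq> g \<longrightarrow> eventually_less f g \<or> eventually_less g f) \<and>
     wf {(f, g). f \<in> B \<and> g \<in> B \<and> eventually_less f g}"

definition b1_family :: "('k::wellorder \<Rightarrow> 'k) set \<Rightarrow> bool" where
  "b1_family B \<longleftrightarrow> (\<forall>f\<in>B. strict_mono f) \<and> wellordered_by_eventually_less B \<and> unbounded B"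

end

theory Submission imports Defs begin
unbundle cardinal_syntax

definition natrel :: "'k::wellorder rel" where "natrel = {(x,y). x \<le> y}"

lemma natrel_Field0: "Field (natrel::'k::wellorder rel) = UNIV"
  unfolding natrel_def Field_def by auto

lemma natrel_WO: "Well_order (natrel :: 'k::wellorder rel)"
proof -
  have F: "Field (natrel::'k rel) = UNIV" by (rule natrel_Field0)
  have "wf ((natrel::'k rel) - Id)"
  proof -
    have "(natrel::'k rel) - Id = {(x,y). x < y}" unfolding natrel_def by auto
    thus ?thesis using wellorder_class.wf by simp
  qed
  moreover have "linear_order (natrel::'k rel)"
    unfolding linear_order_on_def partial_order_on_def preorder_on_def F
    unfolding refl_on_def trans_def antisym_def total_on_def natrel_def by auto
  ultimately show ?thesis unfolding well_order_on_def natrel_Field0 by simp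
qed

lemma natrel_underS: "underS natrel a = {y. y < (a::'k::wellorder)}"
  unfolding underS_def natrel_def by auto

lemma natrel_Field: "Field (natrel::'k::wellorder rel) = UNIV"
  unfolding natrel_def Field_def by auto

lemma seg_exists:
  assumes "|Y| <o |UNIV::'k::wellorder set|"
  shows "\<exists>a::'k. |Y| \<le>o |{y. y < a}|"
proof -
  have "|UNIV::'k set| \<le>o (natrel::'k rel)"
    using card_of_least natrel_WO natrel_Field by metis
  hence "|Y| <o (natrel::'k rel)" using assms ordLess_ordLeq_trans by blast
  then obtain a where "|Y| =o Restr natrel (underS natrel (a::'k))"
    using ordLess_iff_ordIso_Restr[OF natrel_WO card_of_Well_order] by blast
  hence "|Field |Y|| \<le>o |Field (Restr natrel (underS natrel a))|"
    using card_of_mono2 ordIso_iff_ordLeq by blast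
  moreover have "Field (Restr natrel (underS natrel a)) \<subseteq> {y. y < a}"
    using natrel_underS by (metis Field_Restr_subset)
  ultimately show ?thesis using card_of_mono1 ordLeq_transitive by (metis Field_card_of)
qed

lemma small_mono: "A \<subseteq> B \<Longrightarrow> small B T \<Longrightarrow> small A T"
  unfolding small_def using card_of_mono1 ordLeq_ordLess_trans by blast

lemma small_image: "small A T \<Longrightarrow> small (f ` A) T"
  unfolding small_def using card_of_image ordLeq_ordLess_trans by blast

lemma small_seg: "infinite_cardinal_type TYPE('k::wellorder) \<Longrightarrow> small {y. y < (x::'k)} TYPE('k)"
  unfolding small_def infinite_cardinal_type_def by blast

lemma small_Un: "infinite_cardinal_type TYPE('k::wellorder) \<Longrightarrow> small A TYPE('k) \<Longrightarrow> small B TYPE('k)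
   \<Longrightarrow> small (A \<union> B) TYPE('k)"
  unfolding small_def infinite_cardinal_type_def using card_of_Un_ordLess_infinite by blast

lemma small_finite: assumes ICT: "infinite_cardinal_type TYPE('k::wellorder)" and fin: "finite A"
  shows "small A TYPE('k)"
proof -
  have "infinite (UNIV::'k set)" using ICT unfolding infinite_cardinal_type_def by blast
  thus ?thesis unfolding small_def
  using finite_ordLess_infinite[OF card_of_Well_order card_of_Well_order, of A "UNIV::'k set"] fin
  unfolding Field_card_of by blast
qed

lemma small_segle: assumes "infinite_cardinal_type TYPE('k::wellorder)"
  shows "small {y. y \<le> (x::'k)} TYPE('k)"
proof -
  have eq: "{y. y \<le> x} = {y. y < x} \<union> {x}" by auto
  have "small {x} TYPE('k)" using small_finite[OF assms] by blast
  from small_Un[OF assms small_seg[OF assms] this] show ?thesis unfolding eq .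
qed

lemma bounded_small: "infinite_cardinal_type TYPE('k::wellorder) \<Longrightarrow> \<forall>x\<in>X. x \<le> (b::'k) \<Longrightarrow> small X TYPE('k)"
  using small_mono[OF _ small_segle] by (metis mem_Collect_eq subsetI)

lemma UNIV_not_small: "\<not> small (UNIV::'k set) TYPE('k)"
  unfolding small_def using ordLess_irreflexive by blast

lemma small_bounded:
  assumes ICT: "infinite_cardinal_type TYPE('k::wellorder)" and LLL: "lambda_lt_lambda TYPE('k)"
    and sm: "small X TYPE('k)"
  shows "\<exists>b::'k. \<forall>x\<in>X. x \<le> b"
proof (rule ccontr)
  assume "\<not> ?thesis"
  hence unb: "\<forall>b. \<exists>x\<in>X. b < x" by (meson not_le)
  obtain a :: 'k where "|X| \<le>o |{y. y < a}|" using seg_exists sm unfolding small_def by blast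
  then obtain j where j: "inj_on j X" "j ` X \<subseteq> {y. y < a}" using card_of_ordLeq[of X "{y. y < a}"] by blast
  let ?Sig = "SIGMA a:(UNIV::'k set). ({b. b < a} \<rightarrow>\<^sub>E (UNIV :: 'k set))"
  define \<Phi> where "\<Phi> \<phi> = (a, \<lambda>y. if y \<in> j ` X then \<phi> (inv_into X j y) else if y < a then a else undefined)"
    for \<phi> :: "'k \<Rightarrow> 'k"
  have "inj_on \<Phi> (X \<rightarrow>\<^sub>E UNIV)"
  proof (rule inj_onI)
    fix \<phi> \<psi> assume h: "\<phi> \<in> X \<rightarrow>\<^sub>E UNIV" "\<psi> \<in> X \<rightarrow>\<^sub>E UNIV" "\<Phi> \<phi> = \<Phi> \<psi>"
    show "\<phi> = \<psi>"
    proof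
      fix x show "\<phi> x = \<psi> x"
      proof (cases "x \<in> X")
        case True
        have "snd (\<Phi> \<phi>) (j x) = snd (\<Phi> \<psi>) (j x)" using h(3) by simp
        thus ?thesis using True j(1) unfolding \<Phi>_def by simp
      next
        case False thus ?thesis using h(1,2) by (simp add: PiE_def extensional_def)
      qed
    qed
  qed
  moreover have "\<Phi> ` (X \<rightarrow>\<^sub>E UNIV) \<subseteq> ?Sig"
  proof -
    have ja: "\<forall>x\<in>X. j x < a" using j(2) by blast
    show ?thesis using ja unfolding \<Phi>_def by (auto simp: PiE_def extensional_def)
  qed
  ultimately have "|X \<rightarrow>\<^sub>E (UNIV::'k set)| \<le>o |?Sig|" using card_of_ordLeq[of "X \<rightarrow>\<^sub>E (UNIV::'k set)" ?Sig] by blast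
  moreover have "|?Sig| =o |UNIV::'k set|" using LLL unfolding lambda_lt_lambda_def by simp
  ultimately have "|X \<rightarrow>\<^sub>E (UNIV::'k set)| \<le>o |UNIV::'k set|"
    using ordLeq_ordIso_trans by blast
  then obtain F :: "('k \<Rightarrow> 'k) \<Rightarrow> 'k" where F: "inj_on F (X \<rightarrow>\<^sub>E UNIV)"
    using card_of_ordLeq[of "X \<rightarrow>\<^sub>E (UNIV::'k set)" "UNIV::'k set"] by blast
  define g where "g i = inv_into (X \<rightarrow>\<^sub>E UNIV) F i" for i
  have ex: "\<exists>v. v \<notin> (\<lambda>i. g i x) ` {i. i < x}" for x
  proof (rule ccontr)
    assume "\<not> ?thesis"
    hence "(\<lambda>i. g i x) ` {i. i < x} = UNIV" by auto
    moreover have "small ((\<lambda>i. g i x) ` {i. i < x}) TYPE('k)" using small_image small_seg ICT by blast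
    ultimately show False using UNIV_not_small by metis
  qed
  define d where "d x = (if x \<in> X then (SOME v. v \<notin> (\<lambda>i. g i x) ` {i. i < x}) else undefined)" for x
  have dX: "d \<in> X \<rightarrow>\<^sub>E UNIV" unfolding d_def by auto
  hence gd: "g (F d) = d" unfolding g_def using F by simp
  obtain x where x: "x \<in> X" "F d < x" using unb by blast
  have "d x \<notin> (\<lambda>i. g i x) ` {i. i < x}" unfolding d_def using x(1) someI_ex[OF ex] by simp
  moreover have "d x \<in> (\<lambda>i. g i x) ` {i. i < x}" using x(2) gd by (metis (mono_tags, lifting) image_eqI mem_Collect_eq)
  ultimately show False by blast
qed

theorem mainTheorem9:
  fixes B :: "('k::wellorder \<Rightarrow> 'k) set"
  assumes "infinite_cardinal_type TYPE('k)"
    and "lambda_lt_lambda TYPE('k)"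
    and "b1_family B"
  shows "\<exists>\<B> :: ('k \<times> 'k) set set. b5'_family \<B> \<and> (card_of \<B>, card_of B) \<in> ordLeq"
proof -
  note ICT = assms(1) and LLL = assms(2)
  have inc: "\<forall>f\<in>B. strict_mono f" and wo: "wellordered_by_eventually_less B" and unbB: "unbounded B"
    using assms(3) unfolding b1_family_def by auto
  have infU: "infinite (UNIV::'k set)" using ICT unfolding infinite_cardinal_type_def by blast
  define gr where "gr f = range (\<lambda>a. (a, f a))" for f :: "'k \<Rightarrow> 'k"
  define col where "col a = {a} \<times> (UNIV::'k set)" for a :: 'k
  define BB where "BB = gr ` B"
  define CC where "CC = range col"
  have gr_inj: "f = g" if "gr f = gr g" for f g
  proof
    fix a have "(a, f a) \<in> gr g" using that unfolding gr_def by auto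
    thus "f a = g a" unfolding gr_def by auto
  qed
  have col_inj: "inj col" unfolding col_def inj_def by auto
  have size_gr: "size_lambda (gr f) TYPE('k)" for f
  proof -
    have "bij_betw (\<lambda>a. (a, f a)) UNIV (gr f)" unfolding gr_def bij_betw_def inj_def by auto
    thus ?thesis unfolding size_lambda_def using card_of_ordIsoI ordIso_symmetric by blast
  qed
  have size_col: "size_lambda (col a) TYPE('k)" for a
  proof -
    have "bij_betw (Pair a) UNIV (col a)" unfolding col_def bij_betw_def inj_def by auto
    thus ?thesis unfolding size_lambda_def using card_of_ordIsoI ordIso_symmetric by blast
  qed
  have gr_ne_col: "gr f \<noteq> col a" for f a
  proof
    assume e: "gr f = col a"
    obtain b where "b \<noteq> f a" using infU by (metis UNIV_I finite.simps insertCI subsetI finite_subset) 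
    hence "(a, b) \<notin> gr f" unfolding gr_def by auto
    moreover have "(a, b) \<in> col a" unfolding col_def by auto
    ultimately show False using e by simp
  qed
  have "b5'_family BB"
    unfolding b5'_family_def
  proof (intro conjI exI[of _ CC])
    show "BB \<subseteq> big_subsets TYPE('k)" unfolding BB_def big_subsets_def using size_gr by auto
    show "CC \<subseteq> big_subsets TYPE('k)" unfolding CC_def big_subsets_def using size_col by auto
    show "size_lambda CC TYPE('k)"
    proof -
      have "bij_betw col UNIV CC" unfolding CC_def using col_inj by (simp add: bij_betw_def)
      thus ?thesis unfolding size_lambda_def using card_of_ordIsoI ordIso_symmetric by blast
    qed
    show "BB \<inter> CC = {}" unfolding BB_def CC_def using gr_ne_col by auto
    have gg: "small (gr f \<inter> gr g) TYPE('k)" if "f \<in> B" "g \<in> B" "f \<noteq> g" for f g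
    proof -
      have "eventually_less f g \<or> eventually_less g f" using wo that unfolding wellordered_by_eventually_less_def by blast
      hence "small {a. f a \<ge> g a} TYPE('k) \<or> small {a. g a \<ge> f a} TYPE('k)" unfolding eventually_less_def by blast
      moreover have "gr f \<inter> gr g \<subseteq> (\<lambda>a. (a, f a)) ` {a. f a \<ge> g a}" unfolding gr_def by auto
      moreover have "gr f \<inter> gr g \<subseteq> (\<lambda>a. (a, f a)) ` {a. g a \<ge> f a}" unfolding gr_def by auto
      ultimately show ?thesis using small_mono small_image by metis
    qed
    have gc: "small (gr f \<inter> col a) TYPE('k)" for f a
    proof -
      have "gr f \<inter> col a \<subseteq> {(a, f a)}" unfolding gr_def col_def by auto
      thus ?thesis using small_mono small_finite[OF ICT] by (metis finite.emptyI finite.insertI)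
    qed
    have cc: "small (col a \<inter> col b) TYPE('k)" if "a \<noteq> b" for a b
    proof -
      have "col a \<inter> col b = {}" unfolding col_def using that by auto
      thus ?thesis using small_finite[OF ICT] by (metis finite.emptyI)
    qed
    show "almost_disjoint (BB \<union> CC)"
      unfolding almost_disjoint_def
    proof (intro ballI impI)
      fix X Y assume X: "X \<in> BB \<union> CC" and Y: "Y \<in> BB \<union> CC" and ne: "X \<noteq> Y"
      show "small (X \<inter> Y) TYPE('k)"
      proof (cases "X \<in> BB")
        case True
        then obtain f where f: "f \<in> B" "X = gr f" unfolding BB_def by auto
        show ?thesis
        proof (cases "Y \<in> BB")
          case True
          then obtain g where g: "g \<in> B" "Y = gr g" unfolding BB_def by auto
          thus ?thesis using f gg ne by blast
        next
          case False
          then obtain b where "Y = col b" using Y unfolding CC_def by auto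
          thus ?thesis using f gc by simp
        qed
      next
        case False
        then obtain a where a: "X = col a" using X unfolding CC_def by auto
        show ?thesis
        proof (cases "Y \<in> BB")
          case True
          then obtain g where g: "g \<in> B" "Y = gr g" unfolding BB_def by auto
          thus ?thesis using a gc by (simp add: Int_commute)
        next
          case False
          then obtain b where "Y = col b" using Y unfolding CC_def by auto
          hence "a \<noteq> b" using a ne by blast
          thus ?thesis using a cc \<open>Y = col b\<close> by simp
        qed
      qed
    qed
    show "\<forall>DD. DD \<subseteq> CC \<and> size_lambda DD TYPE('k) \<longrightarrow> \<not> separable BB DD"
    proof (intro allI impI notI)
      fix DD assume DD: "DD \<subseteq> CC \<and> size_lambda DD TYPE('k)" and "separable BB DD"
      then obtain S where S: "separates S BB DD" unfolding separable_def by blast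
      define A where "A = {a. col a \<in> DD}"
      have DDA: "DD = col ` A" using DD unfolding A_def CC_def by auto
      have "|A| =o |DD|" unfolding DDA using col_inj card_of_ordIsoI
        by (metis bij_betw_imageI inj_on_subset subset_UNIV)
      hence notsmA: "\<not> small A TYPE('k)"
        using DD unfolding small_def size_lambda_def
        by (meson not_ordLess_ordIso ordIso_ordLess_trans ordIso_symmetric)
      have unbA: "\<forall>b. \<exists>a\<in>A. b \<le> a"
      proof (rule ccontr)
        assume "\<not> ?thesis"
        then obtain b where "\<forall>a\<in>A. a < b" by (meson not_le)
        hence "\<forall>a\<in>A. a \<le> b" by (meson less_imp_le)
        thus False using bounded_small[OF ICT] notsmA by blast
      qed
      have "\<forall>a\<in>A. \<exists>c. \<forall>b\<in>{b. (a, b) \<in> S}. b \<le> c"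
      proof
        fix a assume "a \<in> A"
        hence "small (col a \<inter> S) TYPE('k)" using S unfolding A_def separates_def by blast
        moreover have "{b. (a, b) \<in> S} \<subseteq> snd ` (col a \<inter> S)" unfolding col_def by force
        ultimately have "small {b. (a, b) \<in> S} TYPE('k)" using small_mono small_image by metis
        thus "\<exists>c. \<forall>b\<in>{b. (a, b) \<in> S}. b \<le> c" using small_bounded[OF ICT LLL] by blast
      qed
      then obtain hb where hb: "\<And>a b. a \<in> A \<Longrightarrow> (a, b) \<in> S \<Longrightarrow> b \<le> hb a" by (metis mem_Collect_eq)
      define nxt where "nxt x = (LEAST a. a \<in> A \<and> x \<le> a)" for x
      have nxt: "nxt x \<in> A \<and> x \<le> nxt x" for x
        unfolding nxt_def using unbA by (metis (mono_tags, lifting) LeastI_ex)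
      define h where "h x = hb (nxt x)" for x
      have "\<forall>f\<in>B. eventually_le f h"
      proof
        fix f assume f: "f \<in> B"
        have "almost_subset (gr f) S" using S f unfolding separates_def BB_def by blast
        hence "small (gr f - S) TYPE('k)" unfolding almost_subset_def .
        moreover have "{a. (a, f a) \<notin> S} \<subseteq> fst ` (gr f - S)" unfolding gr_def by force
        ultimately have "small {a. (a, f a) \<notin> S} TYPE('k)" using small_mono small_image by metis
        then obtain e where e: "\<And>a. (a, f a) \<notin> S \<Longrightarrow> a \<le> e" using small_bounded[OF ICT LLL] by blast
        have "{a. f a > h a} \<subseteq> {a. a \<le> e}"
        proof
          fix x assume x: "x \<in> {a. f a > h a}"
          show "x \<in> {a. a \<le> e}"
          proof (rule ccontr)
            assume "x \<notin> {a. a \<le> e}"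
            hence xe: "e < x" by auto
            have "nxt x \<in> A" "x \<le> nxt x" using nxt by auto
            hence "(nxt x, f (nxt x)) \<in> S" using e xe by (meson leD order_less_le_trans)
            hence "f (nxt x) \<le> h x" unfolding h_def using hb \<open>nxt x \<in> A\<close> by blast
            moreover have "f x \<le> f (nxt x)" using inc f \<open>x \<le> nxt x\<close> by (simp add: strict_mono_less_eq)
            ultimately show False using x by simp
          qed
        qed
        thus "eventually_le f h" unfolding eventually_le_def using small_mono small_segle[OF ICT] by blast
      qed
      thus False using unbB unfolding unbounded_def by blast
    qed
  qed
  moreover have "(card_of BB, card_of B) \<in> ordLeq" unfolding BB_def by (rule card_of_image)
  ultimately show ?thesis by blast
qed

end
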